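(* Let $I=CPC$ (classical propositional logic). Then for every formula $\varphi$ (possibly containing $\square$), $\vdash_{L5(I)}\varphi\leftrightarrow\square\varphi$.
   Context: Formulas are built from a countable set $V$ of propositional variables using $\wedge,\vee,\rightarrow,\bot$ and the unary modal operator $\square$. Abbreviations: - $\neg\varphi:=\varphi\rightarrow\bot$; - $\varphi\leftrightarrow\psi:=(\varphi\rightarrow\psi)\wedge(\psi\rightarrow\varphi)$; - $\varphi\equiv\psi:=\square(\varphi\rightarrow\psi)\wedge\square(\psi\rightarrow\varphi)$. For an intermediate logic $I$ (intuitionistic propositional logic extended by axiom schemes that are classical tautologies), the deductive system $L5(I)$ has as axioms all instances of the schemes: (i) all formulas having the form of a theorem of $I$ (possibly containing $\square$); (ii) $\square\varphi\rightarrow\varphi$; (iii) $\square(\varphi\rightarrow\psi)\rightarrow(\square(\psi\rightarrow\chi)\rightarrow\square(\varphi\rightarrow\chi))$; (iv) $\square(\varphi\vee\psi)\rightarrow(\square\varphi\vee\square\psi)$; (v) $\square\varphi\rightarrow\square\square\varphi$; (vi) $\neg\square\varphi\rightarrow\square\neg\square\varphi$. In addition, all formulas $(\varphi\equiv\psi)\rightarrow(\chi[x:=\varphi]\equiv\chi[x:=\psi])$ and all formulas $\varphi\vee\neg\varphi$ are theorems. The rules are: - Modus Ponens; - Axiom Necessitation: from an axiom of the form (i)–(vi) infer $\square$ of it; this rule applies only to axioms (i)–(vi). $\vdash_{L5(I)}\varphi$ means $\varphi$ is derivable. *)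

theory Defs
  imports Main
begin

datatype fm = Var nat | Bot | And fm fm | Or fm fm | Imp fm fm | Box fm

definition Neg :: "fm \<Rightarrow> fm" where "Neg p = Imp p Bot"
definition Iff :: "fm \<Rightarrow> fm \<Rightarrow> fm" where "Iff p q = And (Imp p q) (Imp q p)"
definition Equiv :: "fm \<Rightarrow> fm \<Rightarrow> fm" where
  "Equiv p q = And (Box (Imp p q)) (Box (Imp q p))"

primrec subst :: "(nat \<Rightarrow> fm) \<Rightarrow> fm \<Rightarrow> fm" where
  "subst s (Var x) = s x"
| "subst s Bot = Bot"
| "subst s (And p q) = And (subst s p) (subst s q)"
| "subst s (Or p q) = Or (subst s p) (subst s q)"
| "subst s (Imp p q) = Imp (subst s p) (subst s q)"
| "subst s (Box p) = Box (subst s p)"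

definition subst1 :: "nat \<Rightarrow> fm \<Rightarrow> fm \<Rightarrow> fm" where
  "subst1 x p c = subst (Var(x := p)) c"

primrec boxfree :: "fm \<Rightarrow> bool" where
  "boxfree (Var x) = True"
| "boxfree Bot = True"
| "boxfree (And p q) = (boxfree p \<and> boxfree q)"
| "boxfree (Or p q) = (boxfree p \<and> boxfree q)"
| "boxfree (Imp p q) = (boxfree p \<and> boxfree q)"
| "boxfree (Box p) = False"

primrec cval :: "(nat \<Rightarrow> bool) \<Rightarrow> fm \<Rightarrow> bool" where
  "cval v (Var x) = v x"
| "cval v Bot = False"
| "cval v (And p q) = (cval v p \<and> cval v q)"
| "cval v (Or p q) = (cval v p \<or> cval v q)"
| "cval v (Imp p q) = (cval v p \<longrightarrow> cval v q)"
| "cval v (Box p) = False"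

text \<open>Theorems of I = CPC: the classical tautologies (box-free).\<close>
definition CPC_thm :: "fm \<Rightarrow> bool" where
  "CPC_thm p \<longleftrightarrow> boxfree p \<and> (\<forall>v. cval v p)"

inductive ax :: "fm \<Rightarrow> bool" where
  ax_i:   "CPC_thm p \<Longrightarrow> ax (subst s p)"
| ax_ii:  "ax (Imp (Box p) p)"
| ax_iii: "ax (Imp (Box (Imp p q)) (Imp (Box (Imp q r)) (Box (Imp p r))))"
| ax_iv:  "ax (Imp (Box (Or p q)) (Or (Box p) (Box q)))"
| ax_v:   "ax (Imp (Box p) (Box (Box p)))"
| ax_vi:  "ax (Imp (Neg (Box p)) (Box (Neg (Box p))))"

inductive L5 :: "fm \<Rightarrow> bool" where
  axiom: "ax p \<Longrightarrow> L5 p"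
| AN:    "ax p \<Longrightarrow> L5 (Box p)"
| MP:    "L5 (Imp p q) \<Longrightarrow> L5 p \<Longrightarrow> L5 q"
| SCP:   "L5 (Imp (Equiv p q) (Equiv (subst1 x p c) (subst1 x q c)))"
| TND:   "L5 (Or p (Neg p))"

end

theory Submission
  imports Defs
begin

lemma taut: "boxfree p \<Longrightarrow> (\<forall>v. cval v p) \<Longrightarrow> L5 (subst s p)"
  by (rule L5.axiom, rule ax_i, simp add: CPC_thm_def)

theorem lemma6p1:
  fixes \<phi> :: fm
  shows "L5 (Iff \<phi> (Box \<phi>))"
proof -
  define s where "s = (\<lambda>n::nat. if n = 0 then \<phi> else if n = 1 then Box \<phi> else Box (Neg \<phi>))"
  have em: "ax (Or \<phi> (Neg \<phi>))"
    using ax_i[of "Or (Var 0) (Neg (Var 0))" s]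
    by (simp add: CPC_thm_def Neg_def s_def)
  have 1: "L5 (Or (Box \<phi>) (Box (Neg \<phi>)))"
    by (rule L5.MP[OF L5.axiom[OF ax_iv] L5.AN[OF em]])
  have 2: "L5 (Imp (Box (Neg \<phi>)) (Neg \<phi>))" by (rule L5.axiom[OF ax_ii])
  have 3: "L5 (Imp (Box \<phi>) \<phi>)" by (rule L5.axiom[OF ax_ii])
  have t: "L5 (subst s (Imp (Or (Var 1) (Var 2)) (Imp (Imp (Var 2) (Imp (Var 0) Bot))
     (Imp (Imp (Var 1) (Var 0)) (And (Imp (Var 0) (Var 1)) (Imp (Var 1) (Var 0)))))))"
    by (rule taut) auto
  hence "L5 (Imp (Or (Box \<phi>) (Box (Neg \<phi>))) (Imp (Imp (Box (Neg \<phi>)) (Neg \<phi>))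
     (Imp (Imp (Box \<phi>) \<phi>) (Iff \<phi> (Box \<phi>)))))"
    by (simp add: s_def Neg_def Iff_def)
  then show ?thesis using 1 2 3 by (meson L5.MP)
qed

end
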